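(* For every $n\ge 1$, the expected value of $\Phi_n$ under the Yule model is $$E_Y(\Phi_n)=n(n-1)-2n\sum_{i=2}^n\frac1i.$$
   Context: A binary phylogenetic tree with $n$ leaves is a rooted tree whose leaves are bijectively labeled by $\{1,\dots,n\}$ and whose internal nodes each have exactly two children; $\mathcal{BT}_n$ is the set of such trees up to isomorphism. $\kappa_T(v)$ is the number of leaves below $v$ and $V_{int}(T)$ the set of internal nodes. The depth $\delta_T(v)$ is the number of arcs from the root to $v$; $\varphi_T(i,j)=\delta_T(LCA_T(i,j))$ ($LCA$ = lowest common ancestor), and $\Phi(T)=\sum_{1\le i<j\le n}\varphi_T(i,j)$. $\Phi_n$ is the random variable $\Phi(T)$ for $T$ random in $\mathcal{BT}_n$. Under the Yule model $T\in\mathcal{BT}_n$ has probability $P_Y(T)=\frac{2^{n-1}}{n!}\prod_{v\in V_{int}(T)}\frac{1}{\kappa_T(v)-1}$, and $E_Y$ denotes expectation under it. *)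

theory Defs
  imports Complex_Main
begin

datatype tree = Leaf nat | Node tree tree

fun leaves :: "tree \<Rightarrow> nat set" where
  "leaves (Leaf i) = {i}"
| "leaves (Node l r) = leaves l \<union> leaves r"

text \<open>Canonical representatives of isomorphism classes: labels are distinct
(the leaf sets of the two children are disjoint) and the children are ordered
so that the left child contains the smaller minimal label. Since labels are
distinct, every tree up to isomorphism has exactly one such representative.\<close>
fun canonical :: "tree \<Rightarrow> bool" where
  "canonical (Leaf i) = True"
| "canonical (Node l r) \<longleftrightarrow> canonical l \<and> canonical r \<and>
     leaves l \<inter> leaves r = {} \<and> Min (leaves l) < Min (leaves r)"

definition BT :: "nat \<Rightarrow> tree set" where
  "BT n = {T. canonical T \<and> leaves T = {1..n}}"

definition kappa :: "tree \<Rightarrow> nat" where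
  "kappa T = card (leaves T)"

fun yule_prod :: "tree \<Rightarrow> real" where
  "yule_prod (Leaf i) = 1"
| "yule_prod (Node l r) = (1 / (real (kappa (Node l r)) - 1)) * yule_prod l * yule_prod r"

definition P_Y :: "nat \<Rightarrow> tree \<Rightarrow> real" where
  "P_Y n T = 2 ^ (n - 1) / fact n * yule_prod T"

fun lca_depth :: "tree \<Rightarrow> nat \<Rightarrow> nat \<Rightarrow> nat" where
  "lca_depth (Leaf k) i j = 0"
| "lca_depth (Node l r) i j =
     (if i \<in> leaves l \<and> j \<in> leaves l then 1 + lca_depth l i j
      else if i \<in> leaves r \<and> j \<in> leaves r then 1 + lca_depth r i j
      else 0)"

definition Phi :: "tree \<Rightarrow> nat" where
  "Phi T = (\<Sum>(i, j) \<in> {(i, j). i \<in> leaves T \<and> j \<in> leaves T \<and> i < j}. lca_depth T i j)"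

definition E_Y_Phi :: "nat \<Rightarrow> real" where
  "E_Y_Phi n = (\<Sum>T \<in> BT n. P_Y n T * real (Phi T))"

end

theory Submission
  imports Defs
begin


lemma leaves_finite: "finite (leaves T)" by (induct T) auto
lemma leaves_ne: "leaves T \<noteq> {}" by (induct T) auto

definition prs :: "nat set \<Rightarrow> (nat \<times> nat) set" where
  "prs A = {(i, j). i \<in> A \<and> j \<in> A \<and> i < j}"

lemma prs_finite: "finite A \<Longrightarrow> finite (prs A)"
  by (rule finite_subset[of _ "A \<times> A"]) (auto simp: prs_def)

lemma card_prs: assumes "finite A" shows "card (prs A) = card A choose 2"
proof -
  have "bij_betw (\<lambda>(i,j). {i,j}) (prs A) {B. B \<subseteq> A \<and> card B = 2}"
    unfolding bij_betw_def
  proof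
    show "inj_on (\<lambda>(i,j). {i,j}) (prs A)"
      by (auto simp: inj_on_def prs_def doubleton_eq_iff)
    show "(\<lambda>(i,j). {i,j}) ` prs A = {B. B \<subseteq> A \<and> card B = 2}"
    proof
      show "(\<lambda>(i,j). {i,j}) ` prs A \<subseteq> {B. B \<subseteq> A \<and> card B = 2}"
        by (auto simp: prs_def)
      show "{B. B \<subseteq> A \<and> card B = 2} \<subseteq> (\<lambda>(i,j). {i,j}) ` prs A"
      proof
        fix B assume "B \<in> {B. B \<subseteq> A \<and> card B = 2}"
        then obtain x y where B: "B = {x,y}" "x \<noteq> y" "B \<subseteq> A" by (auto simp: card_2_iff)
        show "B \<in> (\<lambda>(i,j). {i,j}) ` prs A"
        proof (cases "x < y")
          case True
          then show ?thesis using B by (auto simp: prs_def image_iff intro!: bexI[of _ "(x,y)"])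
        next
          case False
          then have "y < x" using B by auto
          then show ?thesis using B by (auto simp: prs_def image_iff intro!: bexI[of _ "(y,x)"])
        qed
      qed
    qed
  qed
  then have "card (prs A) = card {B. B \<subseteq> A \<and> card B = 2}" by (rule bij_betw_same_card)
  also have "\<dots> = card A choose 2" using n_subsets[OF assms] by simp
  finally show ?thesis .
qed

lemma Phi_alt: "Phi T = (\<Sum>p\<in>prs (leaves T). lca_depth T (fst p) (snd p))"
  unfolding Phi_def prs_def by (rule sum.cong) auto

lemma Phi_Node:
  assumes d: "leaves l \<inter> leaves r = {}"
  shows "Phi (Node l r) = Phi l + Phi r + (card (leaves l) choose 2) + (card (leaves r) choose 2)"
proof -
  let ?L = "leaves l" and ?R = "leaves r"
  have fin: "finite (prs (?L \<union> ?R))" by (simp add: prs_finite leaves_finite)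
  have eq: "\<And>p. p \<in> prs (?L \<union> ?R) \<Longrightarrow> lca_depth (Node l r) (fst p) (snd p) =
     (if p \<in> prs ?L then 1 + lca_depth l (fst p) (snd p) else 0) +
     (if p \<in> prs ?R then 1 + lca_depth r (fst p) (snd p) else 0)"
    using d by (auto simp: prs_def)
  have s1: "{p \<in> prs (?L \<union> ?R). p \<in> prs ?L} = prs ?L" by (auto simp: prs_def)
  have s2: "{p \<in> prs (?L \<union> ?R). p \<in> prs ?R} = prs ?R" by (auto simp: prs_def)
  have "Phi (Node l r) = (\<Sum>p\<in>prs (?L \<union> ?R). (if p \<in> prs ?L then 1 + lca_depth l (fst p) (snd p) else 0) +
     (if p \<in> prs ?R then 1 + lca_depth r (fst p) (snd p) else 0))"
    unfolding Phi_alt leaves.simps by (rule sum.cong[OF refl]) (rule eq, simp)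
  also have "\<dots> = (\<Sum>p\<in>prs ?L. 1 + lca_depth l (fst p) (snd p)) + (\<Sum>p\<in>prs ?R. 1 + lca_depth r (fst p) (snd p))"
    unfolding sum.distrib sum.inter_filter[OF fin, symmetric] s1 s2 ..
  also have "\<dots> = Phi l + Phi r + card (prs ?L) + card (prs ?R)"
    unfolding Phi_alt sum.distrib by simp
  finally show ?thesis by (simp add: card_prs leaves_finite)
qed



definition BTs :: "nat set \<Rightarrow> tree set" where "BTs S = {T. canonical T \<and> leaves T = S}"
definition Splits :: "nat set \<Rightarrow> nat set set" where
  "Splits S = {L. L \<subseteq> S \<and> Min S \<in> L \<and> L \<noteq> S}"

lemma Splits_props:
  assumes "finite S" "L \<in> Splits S"
  shows "finite L" "L \<noteq> {}" "S - L \<noteq> {}" "card L < card S" "card (S - L) < card S"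
    "card (S - L) = card S - card L" "card L \<ge> 1"
proof -
  have L: "L \<subseteq> S" "Min S \<in> L" "L \<noteq> S" using assms(2) by (auto simp: Splits_def)
  show "finite L" using L assms(1) finite_subset by blast
  show "L \<noteq> {}" using L by auto
  show "S - L \<noteq> {}" using L by auto
  show "card L < card S" using L assms(1) by (meson psubsetI psubset_card_mono)
  show "card (S - L) = card S - card L" using L assms(1) by (simp add: card_Diff_subset finite_subset)
  have "Min S \<notin> S - L" using L by auto
  moreover have "Min S \<in> S" using L by auto
  ultimately show "card (S - L) < card S" using assms(1)
    by (metis Diff_subset psubsetI psubset_card_mono)
  show "card L \<ge> 1" using L assms(1)
    by (metis One_nat_def Suc_leI card_gt_0_iff empty_iff finite_subset)
qed

lemma BTs_Node:
  assumes fin: "finite S" and c: "card S \<ge> 2"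
  shows "BTs S = (\<lambda>(L, l, r). Node l r) ` (SIGMA L:Splits S. BTs L \<times> BTs (S - L))"
proof
  show "BTs S \<subseteq> (\<lambda>(L, l, r). Node l r) ` (SIGMA L:Splits S. BTs L \<times> BTs (S - L))"
  proof
    fix T assume T: "T \<in> BTs S"
    show "T \<in> (\<lambda>(L, l, r). Node l r) ` (SIGMA L:Splits S. BTs L \<times> BTs (S - L))"
    proof (cases T)
      case (Leaf i)
      then show ?thesis using T c by (auto simp: BTs_def)
    next
      case (Node l r)
      let ?L = "leaves l" and ?R = "leaves r"
      have cl: "canonical l" "canonical r" "?L \<inter> ?R = {}" "Min ?L < Min ?R" "?L \<union> ?R = S"
        using T Node by (auto simp: BTs_def)
      have "Min S = min (Min ?L) (Min ?R)" using cl(5)[symmetric]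
        by (simp add: Min_Un leaves_finite leaves_ne)
      then have "Min S = Min ?L" using cl(4) by simp
      then have "Min S \<in> ?L" by (simp add: leaves_finite leaves_ne)
      moreover have "?L \<noteq> S" using cl(3,5) leaves_ne[of r] by blast
      ultimately have "?L \<in> Splits S" using cl(5) by (auto simp: Splits_def)
      moreover have "S - ?L = ?R" using cl(3,5) by blast
      ultimately show ?thesis using Node cl
        by (auto simp: BTs_def image_iff intro!: bexI[of _ "(?L, l, r)"])
    qed
  qed
next
  show "(\<lambda>(L, l, r). Node l r) ` (SIGMA L:Splits S. BTs L \<times> BTs (S - L)) \<subseteq> BTs S"
  proof clarify
    fix L l r assume L: "L \<in> Splits S" and l: "l \<in> BTs L" and r: "r \<in> BTs (S - L)"
    have LS: "L \<subseteq> S" "Min S \<in> L" using L by (auto simp: Splits_def)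
    have fL: "finite L" "finite (S - L)" "S - L \<noteq> {}" using Splits_props[OF fin L] by auto
    have "Min L = Min S"
    proof (rule antisym)
      show "Min L \<le> Min S" using LS fL(1) by simp
      show "Min S \<le> Min L" using LS fL(1) fin by (metis Min_in Min_le empty_iff subsetD)
    qed
    moreover have "Min S < Min (S - L)"
    proof -
      have "Min (S - L) \<in> S - L" using fL by (meson Min_in)
      then have "Min (S - L) \<in> S" "Min (S - L) \<noteq> Min S" using LS by auto
      moreover have "Min S \<le> Min (S - L)" using fin \<open>Min (S - L) \<in> S\<close> by (rule Min_le)
      ultimately show ?thesis by simp
    qed
    ultimately show "Node l r \<in> BTs S" using l r LS by (auto simp: BTs_def)
  qed
qed

lemma inj_Node: "inj_on (\<lambda>(L, l, r). Node l r) (SIGMA L:Splits S. BTs L \<times> BTs (S - L))"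
  by (auto simp: inj_on_def BTs_def)

lemma BTs_sum:
  assumes fin: "finite S" and c: "card S \<ge> 2"
    and fB: "\<And>L. L \<in> Splits S \<Longrightarrow> finite (BTs L) \<and> finite (BTs (S - L))"
  shows "(\<Sum>T\<in>BTs S. f T) = (\<Sum>L\<in>Splits S. \<Sum>l\<in>BTs L. \<Sum>r\<in>BTs (S - L). f (Node l r))"
    and "finite (BTs S)"
proof -
  have fS: "finite (Splits S)" using fin by (rule finite_subset[rotated, OF finite_Pow_iff[THEN iffD2]]) (auto simp: Splits_def)
  have fSig: "finite (SIGMA L:Splits S. BTs L \<times> BTs (S - L))" using fS fB by auto
  show "finite (BTs S)" using BTs_Node[OF fin c] fSig by simp
  have "(\<Sum>T\<in>BTs S. f T) = (\<Sum>x\<in>(SIGMA L:Splits S. BTs L \<times> BTs (S - L)). f ((\<lambda>(L, l, r). Node l r) x))"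
    unfolding BTs_Node[OF fin c] by (rule sum.reindex[OF inj_Node, unfolded comp_def])
  also have "\<dots> = (\<Sum>L\<in>Splits S. \<Sum>p\<in>BTs L \<times> BTs (S - L). f (Node (fst p) (snd p)))"
    by (subst sum.Sigma[OF fS]) (use fB in \<open>auto intro!: sum.cong simp: split_def\<close>)
  also have "\<dots> = (\<Sum>L\<in>Splits S. \<Sum>l\<in>BTs L. \<Sum>r\<in>BTs (S - L). f (Node l r))"
    by (rule sum.cong[OF refl]) (simp add: sum.cartesian_product split_def)
  finally show "(\<Sum>T\<in>BTs S. f T) = (\<Sum>L\<in>Splits S. \<Sum>l\<in>BTs L. \<Sum>r\<in>BTs (S - L). f (Node l r))" .
qed

lemma splits_sum:
  fixes h :: "nat \<Rightarrow> real"
  assumes fin: "finite S" and m: "card S = m" "m \<ge> 1"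
  shows "(\<Sum>L\<in>Splits S. h (card L)) = (\<Sum>k=1..m-1. real ((m-1) choose (k-1)) * h k)"
proof -
  define a where "a = Min S"
  define A where "A = S - {a}"
  have aS: "a \<in> S" using m fin a_def by (metis Min_in card.empty not_one_le_zero)
  have cA: "card A = m - 1" using aS fin m by (simp add: A_def)
  have fA: "finite A" using fin A_def by simp
  have fS: "finite (Splits S)" using fin by (rule finite_subset[rotated, OF finite_Pow_iff[THEN iffD2]]) (auto simp: Splits_def)
  have img: "card ` Splits S \<subseteq> {1..m-1}" using Splits_props[OF fin] m by fastforce
  have "(\<Sum>L\<in>Splits S. h (card L)) = (\<Sum>k=1..m-1. \<Sum>L\<in>{L. L \<in> Splits S \<and> card L = k}. h (card L))"
    by (rule sum.group[OF fS _ img, symmetric]) simp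
  also have "\<dots> = (\<Sum>k=1..m-1. real ((m-1) choose (k-1)) * h k)"
  proof (rule sum.cong[OF refl])
    fix k assume k: "k \<in> {1..m-1}"
    have "bij_betw (insert a) {B. B \<subseteq> A \<and> card B = k - 1} {L. L \<in> Splits S \<and> card L = k}"
      unfolding bij_betw_def
    proof
      show "inj_on (insert a) {B. B \<subseteq> A \<and> card B = k - 1}"
        by (auto simp: inj_on_def A_def)
      show "insert a ` {B. B \<subseteq> A \<and> card B = k - 1} = {L. L \<in> Splits S \<and> card L = k}"
      proof
        show "insert a ` {B. B \<subseteq> A \<and> card B = k - 1} \<subseteq> {L. L \<in> Splits S \<and> card L = k}"
        proof clarify
          fix B assume B: "B \<subseteq> A" "card B = k - 1"
          have fB: "finite B" using B fA finite_subset by blast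
          have aB: "a \<notin> B" using B A_def by auto
          have ck: "card (insert a B) = k" using fB aB B k by simp
          have "insert a B \<noteq> S" using ck k m by auto
          then show "insert a B \<in> Splits S \<and> card (insert a B) = k"
            using ck B aS by (auto simp: Splits_def A_def a_def)
        qed
        show "{L. L \<in> Splits S \<and> card L = k} \<subseteq> insert a ` {B. B \<subseteq> A \<and> card B = k - 1}"
        proof clarify
          fix L assume L: "L \<in> Splits S" "k = card L"
          have fL: "finite L" using Splits_props[OF fin L(1)] by simp
          have aL: "a \<in> L" "L \<subseteq> S" using L by (auto simp: Splits_def a_def)
          show "L \<in> insert a ` {B. B \<subseteq> A \<and> card B = card L - 1}"
            using aL fL by (auto simp: image_iff A_def intro!: exI[of _ "L - {a}"])
        qed
      qed
    qed
    then have "card {L. L \<in> Splits S \<and> card L = k} = card {B. B \<subseteq> A \<and> card B = k - 1}"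
      by (rule bij_betw_same_card[symmetric])
    also have "\<dots> = (m - 1) choose (k - 1)" using n_subsets[OF fA] cA by simp
    finally have cc: "card {L. L \<in> Splits S \<and> card L = k} = (m - 1) choose (k - 1)" .
    have "(\<Sum>L\<in>{L. L \<in> Splits S \<and> card L = k}. h (card L)) = (\<Sum>L\<in>{L. L \<in> Splits S \<and> card L = k}. h k)"
      by (rule sum.cong) auto
    then show "(\<Sum>L\<in>{L. L \<in> Splits S \<and> card L = k}. h (card L)) = real ((m-1) choose (k-1)) * h k"
      using cc by simp
  qed
  finally show ?thesis .
qed



definition w :: "nat \<Rightarrow> real" where "w k = 2 * fact k / 2 ^ k"
definition E :: "nat \<Rightarrow> real" where
  "E m = real m * (real m - 1) - 2 * real m * (\<Sum>i = 2..m. 1 / real i)"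
definition G :: "nat \<Rightarrow> real" where "G k = E k + real (k choose 2)"

lemma choose2_real: "real (k choose 2) = real k * (real k - 1) / 2"
proof (induct k)
  case 0 then show ?case by simp
next
  case (Suc k)
  have "Suc k choose 2 = k + (k choose 2)"
    by (simp add: numeral_2_eq_2)
  then show ?case using Suc by (simp add: field_simps)
qed

lemma coef:
  assumes "1 \<le> k" "k < m"
  shows "real ((m-1) choose (k-1)) * w k * w (m-k) = 4 * fact (m-1) * real k / 2 ^ m"
proof -
  have b: "real ((m-1) choose (k-1)) = fact (m-1) / (fact (k-1) * fact (m-k))"
  proof -
    have "k - 1 \<le> m - 1" using assms by simp
    from binomial_fact[OF this] have "real ((m-1) choose (k-1)) = fact (m-1) / (fact (k-1) * fact (m - 1 - (k - 1)))" by simp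
    moreover have "m - 1 - (k - 1) = m - k" using assms by simp
    ultimately show ?thesis by simp
  qed
  have fk: "(fact k :: real) = real k * fact (k-1)" using assms fact_reduce[of k] by simp
  have p: "(2::real) ^ m = 2 ^ k * 2 ^ (m - k)"
    using assms by (simp add: power_add[symmetric])
  have nz: "(fact (k-1)::real) \<noteq> 0" "(fact (m-k)::real) \<noteq> 0" by auto
  show ?thesis unfolding w_def b fk p using nz
    by (simp add: field_simps)
qed

lemma sumG: "(\<Sum>k=1..n. G k) = real n * E (Suc n) / 2"
proof (induct n)
  case 0 then show ?case by (simp add: E_def)
next
  case (Suc n)
  define H where "H = (\<Sum>i = 2..Suc n. 1 / real i)"
  have H2: "(\<Sum>i = 2..Suc (Suc n). 1 / real i) = H + 1 / (real n + 2)"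
    unfolding H_def by (simp add: sum.cl_ivl_Suc)
  have "(\<Sum>k=1..Suc n. G k) = real n * E (Suc n) / 2 + G (Suc n)"
    using Suc by simp
  also have "\<dots> = real (Suc n) * E (Suc (Suc n)) / 2"
    unfolding G_def choose2_real E_def H2 H_def[symmetric]
    by (simp add: field_simps)
  finally show ?case .
qed

lemma refl_sum:
  fixes g :: "nat \<Rightarrow> real"
  shows "(\<Sum>k=1..m-1. real k * (g k + g (m-k))) = real m * (\<Sum>k=1..m-1. g k)"
proof -
  have "(\<Sum>k=1..m-1. real k * g (m-k)) = (\<Sum>k=1..m-1. real (m - k) * g k)"
    by (rule sum.reindex_bij_witness[of _ "\<lambda>k. m-k" "\<lambda>k. m-k"]) auto
  then have "(\<Sum>k=1..m-1. real k * (g k + g (m-k))) = (\<Sum>k=1..m-1. (real k + real (m - k)) * g k)"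
    by (simp add: distrib_left distrib_right sum.distrib)
  also have "\<dots> = (\<Sum>k=1..m-1. real m * g k)"
    by (rule sum.cong) (auto simp: of_nat_diff)
  finally show ?thesis by (simp add: sum_distrib_left)
qed

lemma triple:
  fixes c K :: real
  shows "(\<Sum>l\<in>A. \<Sum>r\<in>B. c * (p l * q r + u l * v r + u l * q r * K)) =
    c * ((\<Sum>l\<in>A. p l) * (\<Sum>r\<in>B. q r) + (\<Sum>l\<in>A. u l) * (\<Sum>r\<in>B. v r) + (\<Sum>l\<in>A. u l) * (\<Sum>r\<in>B. q r) * K)"
proof -
  have i: "(\<Sum>r\<in>B. c * (p l * q r + u l * v r + u l * q r * K)) =
     c * (p l * (\<Sum>r\<in>B. q r)) + c * (u l * (\<Sum>r\<in>B. v r)) + c * K * (u l * (\<Sum>r\<in>B. q r))" for l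
  proof -
    have "(\<Sum>r\<in>B. c * (p l * q r + u l * v r + u l * q r * K)) =
      (\<Sum>r\<in>B. c * (p l * q r) + c * (u l * v r) + c * K * (u l * q r))"
      by (rule sum.cong) (simp_all add: algebra_simps)
    also have "\<dots> = c * (p l * (\<Sum>r\<in>B. q r)) + c * (u l * (\<Sum>r\<in>B. v r)) + c * K * (u l * (\<Sum>r\<in>B. q r))"
      by (simp only: sum.distrib sum_distrib_left[symmetric])
    finally show ?thesis .
  qed
  have "(\<Sum>l\<in>A. \<Sum>r\<in>B. c * (p l * q r + u l * v r + u l * q r * K)) =
     c * ((\<Sum>l\<in>A. p l) * (\<Sum>r\<in>B. q r)) + c * ((\<Sum>l\<in>A. u l) * (\<Sum>r\<in>B. v r)) + c * K * ((\<Sum>l\<in>A. u l) * (\<Sum>r\<in>B. q r))"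
    by (simp only: i sum.distrib sum_distrib_left[symmetric] sum_distrib_right[symmetric]) algebra?
  also have "\<dots> = c * ((\<Sum>l\<in>A. p l) * (\<Sum>r\<in>B. q r) + (\<Sum>l\<in>A. u l) * (\<Sum>r\<in>B. v r) + (\<Sum>l\<in>A. u l) * (\<Sum>r\<in>B. q r) * K)"
    by algebra
  finally show ?thesis .
qed



lemma BTs_single: "BTs {a} = {Leaf a}"
proof -
  have "T = Leaf a" if "canonical T" "leaves T = {a}" for T
  proof (cases T)
    case (Node l r)
    then have "leaves l \<subseteq> {a}" "leaves r \<subseteq> {a}" "leaves l \<inter> leaves r = {}"
      using that by auto
    then show ?thesis using leaves_ne[of l] leaves_ne[of r] by blast
  qed (use that in auto)
  then show ?thesis by (auto simp: BTs_def)
qed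

lemma main:
  assumes "finite S" "card S = m" "m \<ge> 1"
  shows "finite (BTs S) \<and> (\<Sum>T\<in>BTs S. yule_prod T) = w m \<and>
         (\<Sum>T\<in>BTs S. yule_prod T * real (Phi T)) = w m * E m"
  using assms
proof (induction m arbitrary: S rule: less_induct)
  case (less m)
  show ?case
  proof (cases "m = 1")
    case True
    then obtain a where S: "S = {a}" using less.prems card_1_singletonE by blast
    have "Phi (Leaf a) = 0" by (simp add: Phi_def)
    then show ?thesis using S True by (simp add: BTs_single w_def E_def)
  next
    case False
    then have m2: "m \<ge> 2" using less.prems by simp
    have fin: "finite S" and cS: "card S = m" using less.prems by auto
    have IH: "finite (BTs L) \<and> (\<Sum>T\<in>BTs L. yule_prod T) = w (card L) \<and>
         (\<Sum>T\<in>BTs L. yule_prod T * real (Phi T)) = w (card L) * E (card L)"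
      if "L \<in> Splits S \<or> L \<in> (\<lambda>L. S - L) ` Splits S" for L
    proof -
      have "finite L" "card L < m" "card L \<ge> 1"
        using that Splits_props[OF fin] cS fin
        by (auto simp: Suc_le_eq card_gt_0_iff)
      then show ?thesis using less.IH by blast
    qed
    have fB: "\<And>L. L \<in> Splits S \<Longrightarrow> finite (BTs L) \<and> finite (BTs (S - L))"
      using IH by blast
    have node: "kappa (Node l r) = m"
      if "L \<in> Splits S" "l \<in> BTs L" "r \<in> BTs (S - L)" for L l r
      using that cS by (auto simp: kappa_def BTs_def Splits_def Un_absorb1)
    have disj: "leaves l \<inter> leaves r = {}" if "l \<in> BTs L" "r \<in> BTs (S - L)" for L l r
      using that by (auto simp: BTs_def)
    have cR: "card (S - L) = m - card L" if "L \<in> Splits S" for L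
      using Splits_props[OF fin that] cS by simp
    have c2: "card S \<ge> 2" using m2 cS by simp
    define c where "c = 1 / (real m - 1)"
    have W: "(\<Sum>T\<in>BTs S. yule_prod T) = (\<Sum>L\<in>Splits S. c * (w (card L) * w (m - card L)))"
    proof -
      have "(\<Sum>T\<in>BTs S. yule_prod T) = (\<Sum>L\<in>Splits S. \<Sum>l\<in>BTs L. \<Sum>r\<in>BTs (S - L). yule_prod (Node l r))"
        by (rule BTs_sum(1)[OF fin c2 fB])
      also have "(\<Sum>L\<in>Splits S. \<Sum>l\<in>BTs L. \<Sum>r\<in>BTs (S - L). yule_prod (Node l r)) =
        (\<Sum>L\<in>Splits S. c * (w (card L) * w (m - card L)))"
      proof (rule sum.cong[OF refl])
        fix L assume L: "L \<in> Splits S"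
        have "(\<Sum>l\<in>BTs L. \<Sum>r\<in>BTs (S - L). yule_prod (Node l r)) =
              (\<Sum>l\<in>BTs L. \<Sum>r\<in>BTs (S - L). c * (yule_prod l * yule_prod r))"
          by (intro sum.cong refl) (simp add: node[OF L] c_def)
        also have "\<dots> = c * ((\<Sum>l\<in>BTs L. yule_prod l) * (\<Sum>r\<in>BTs (S - L). yule_prod r))"
          by (simp only: sum_product sum_distrib_left[of c])
        also have "\<dots> = c * (w (card L) * w (m - card L))"
          using IH[of L] IH[of "S - L"] L cR[OF L] by auto
        finally show "(\<Sum>l\<in>BTs L. \<Sum>r\<in>BTs (S - L). yule_prod (Node l r)) = c * (w (card L) * w (m - card L))" .
      qed
      finally show ?thesis .
    qed
    have F: "(\<Sum>T\<in>BTs S. yule_prod T * real (Phi T)) =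
       (\<Sum>L\<in>Splits S. c * w (card L) * w (m - card L) * (G (card L) + G (m - card L)))"
    proof -
      have "(\<Sum>T\<in>BTs S. yule_prod T * real (Phi T)) = (\<Sum>L\<in>Splits S. \<Sum>l\<in>BTs L. \<Sum>r\<in>BTs (S - L). yule_prod (Node l r) * real (Phi (Node l r)))"
        by (rule BTs_sum(1)[OF fin c2 fB])
      also have "(\<Sum>L\<in>Splits S. \<Sum>l\<in>BTs L. \<Sum>r\<in>BTs (S - L). yule_prod (Node l r) * real (Phi (Node l r))) =
        (\<Sum>L\<in>Splits S. c * w (card L) * w (m - card L) * (G (card L) + G (m - card L)))"
      proof (rule sum.cong[OF refl])
        fix L assume L: "L \<in> Splits S"
        define K where "K = real (card L choose 2) + real (card (S - L) choose 2)"
        have "(\<Sum>l\<in>BTs L. \<Sum>r\<in>BTs (S - L). yule_prod (Node l r) * real (Phi (Node l r))) =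
              (\<Sum>l\<in>BTs L. \<Sum>r\<in>BTs (S - L). c * ((yule_prod l * real (Phi l)) * yule_prod r
                 + yule_prod l * (yule_prod r * real (Phi r)) + yule_prod l * yule_prod r * K))"
        proof (intro sum.cong refl)
          fix l r assume l: "l \<in> BTs L" and r: "r \<in> BTs (S - L)"
          have ll: "leaves l = L" "leaves r = S - L" using l r by (auto simp: BTs_def)
          show "yule_prod (Node l r) * real (Phi (Node l r)) = c * ((yule_prod l * real (Phi l)) * yule_prod r
                 + yule_prod l * (yule_prod r * real (Phi r)) + yule_prod l * yule_prod r * K)"
            unfolding Phi_Node[OF disj[OF l r]] using node[OF L l r]
            by (simp add: c_def K_def ll algebra_simps)
        qed
        also have "\<dots> = c * ((\<Sum>l\<in>BTs L. yule_prod l * real (Phi l)) * (\<Sum>r\<in>BTs (S - L). yule_prod r)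
             + (\<Sum>l\<in>BTs L. yule_prod l) * (\<Sum>r\<in>BTs (S - L). yule_prod r * real (Phi r))
             + (\<Sum>l\<in>BTs L. yule_prod l) * (\<Sum>r\<in>BTs (S - L). yule_prod r) * K)"
          by (rule triple)
        also have "\<dots> = c * (w (card L) * E (card L) * w (m - card L) + w (card L) * (w (m - card L) * E (m - card L))
             + w (card L) * w (m - card L) * K)"
          using IH[of L] IH[of "S - L"] L cR[OF L] by auto
        also have "\<dots> = c * w (card L) * w (m - card L) * (G (card L) + G (m - card L))"
          by (simp add: G_def K_def cR[OF L] algebra_simps)
        finally show "(\<Sum>l\<in>BTs L. \<Sum>r\<in>BTs (S - L). yule_prod (Node l r) * real (Phi (Node l r))) =
           c * w (card L) * w (m - card L) * (G (card L) + G (m - card L))" .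
      qed
      finally show ?thesis .
    qed
    have fBS: "finite (BTs S)" using BTs_sum(2)[OF fin c2 fB] by simp
    define D where "D = c * (4 * fact (m - 1) / 2 ^ m)"
    have coefs: "real ((m-1) choose (k-1)) * (c * w k * w (m - k) * X) = D * (real k * X)"
      if "k \<in> {1..m-1}" for k X
    proof -
      have "real ((m-1) choose (k-1)) * (c * w k * w (m - k) * X) = c * X * (real ((m-1) choose (k-1)) * w k * w (m-k))"
        by (simp add: algebra_simps)
      also have "\<dots> = D * (real k * X)"
      proof -
        have "1 \<le> k" "k < m" using that m2 by auto
        from coef[OF this] show ?thesis by (simp add: D_def)
      qed
      finally show ?thesis .
    qed
    have cm: "c * (real m - 1) = 1" using m2 by (simp add: c_def)
    have wm: "w m = 2 * real m * fact (m - 1) / 2 ^ m" unfolding w_def using fact_reduce[of m] m2 by simp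
    have gauss: "(\<Sum>k=1..m-1. real k) = real m * (real m - 1) / 2"
    proof -
      have "(\<Sum>k=1..m-1. real k * ((\<lambda>_. 1::real) k + (\<lambda>_. 1) (m - k))) = real m * (\<Sum>k=1..m-1. (\<lambda>_. 1::real) k)"
        by (rule refl_sum)
      then show ?thesis using m2 by (simp add: of_nat_diff sum_distrib_right[symmetric])
    qed
    have "(\<Sum>T\<in>BTs S. yule_prod T) = (\<Sum>k=1..m-1. real ((m-1) choose (k-1)) * (c * w k * w (m - k) * 1))"
      unfolding W using splits_sum[OF fin cS, of "\<lambda>k. c * w k * w (m - k) * 1"] m2 by (simp add: mult.assoc)
    also have "\<dots> = (\<Sum>k=1..m-1. D * (real k * 1))"
      by (rule sum.cong[OF refl]) (rule coefs)
    also have "\<dots> = D * (\<Sum>k=1..m-1. real k)" by (simp add: sum_distrib_left)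
    also have "\<dots> = w m"
    proof -
      have "D * (\<Sum>k=1..m-1. real k) = (c * (real m - 1)) * (2 * real m * fact (m - 1) / 2 ^ m)"
        unfolding gauss D_def by (simp add: field_simps)
      then show ?thesis using cm wm by simp
    qed
    finally have Wm: "(\<Sum>T\<in>BTs S. yule_prod T) = w m" .
    have "(\<Sum>T\<in>BTs S. yule_prod T * real (Phi T)) = (\<Sum>k=1..m-1. real ((m-1) choose (k-1)) * (c * w k * w (m - k) * (G k + G (m - k))))"
      unfolding F using splits_sum[OF fin cS, of "\<lambda>k. c * w k * w (m - k) * (G k + G (m - k))"] m2 by simp
    also have "\<dots> = (\<Sum>k=1..m-1. D * (real k * (G k + G (m - k))))"
      by (rule sum.cong[OF refl]) (rule coefs)
    also have "\<dots> = D * (\<Sum>k=1..m-1. real k * (G k + G (m - k)))"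
      by (simp add: sum_distrib_left)
    also have "\<dots> = D * (real m * (\<Sum>k=1..m-1. G k))" by (simp only: refl_sum)
    also have "\<dots> = D * (real m * (real (m - 1) * E m / 2))" using sumG[of "m-1"] m2 by simp
    also have "\<dots> = w m * E m"
    proof -
      have rm: "real (m - 1) = real m - 1" using m2 by (simp add: of_nat_diff)
      have "D * (real m * (real (m - 1) * E m / 2)) = (c * (real m - 1)) * (2 * real m * fact (m - 1) / 2 ^ m) * E m"
        unfolding D_def rm by (simp add: field_simps)
      then show ?thesis using cm wm by simp
    qed
    finally show ?thesis using fBS Wm by simp
  qed
qed


theorem mainTheorem14:
  fixes n :: nat
  assumes "n \<ge> 1"
  shows "E_Y_Phi n = real n * (real n - 1) - 2 * real n * (\<Sum>i = 2..n. 1 / real i)"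
proof -
  have M: "(\<Sum>T\<in>BTs {1..n}. yule_prod T * real (Phi T)) = w n * E n"
    using main[of "{1..n}" n] assms by simp
  have "E_Y_Phi n = 2 ^ (n - 1) / fact n * (\<Sum>T\<in>BTs {1..n}. yule_prod T * real (Phi T))"
    unfolding E_Y_Phi_def P_Y_def BT_def BTs_def[symmetric] sum_distrib_left by (simp add: mult.assoc)
  also have "\<dots> = (2 ^ (n - 1) * 2) / 2 ^ n * E n" unfolding M w_def by simp
  also have "(2::real) ^ (n - 1) * 2 = 2 ^ n" using assms by (cases n) auto
  finally show ?thesis by (simp add: E_def)
qed

end
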